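(* Let $n\ge 3$ and let $(u,v)$ be an MAB pair of binary words with $|u|=|v|=n$, $i=\mathrm{lsb}(u,v)$, $j=\mathrm{lsb}(v,u)$ and $i+j>n$. Write $u=\alpha\gamma\beta$ and $v=\beta'\gamma'\alpha'$ with $|\alpha|=|\alpha'|=n-i$, $|\gamma|=|\gamma'|=i+j-n$ and $|\beta|=|\beta'|=n-j$ (so that $\mathrm{sb}(u,v)=(\gamma\beta,\beta'\gamma')$ and $\mathrm{sb}(v,u)=(\gamma'\alpha',\alpha\gamma)$). Then $\big||\alpha|_c-|\alpha'|_c\big|=1$ for all $c\in\{a,b\}$ if and only if $i+j-n=1$.
   Context: Let $\Sigma=\{a,b\}$. For a word $w$ and a letter $c$, $|w|_c$ denotes the number of occurrences of $c$ in $w$. Two words $x,y$ are abelian equivalent, written $x\sim_{\mathrm{abl}}y$, if $|x|_c=|y|_c$ for all $c\in\Sigma$. For words $u,v$: a pair $(x,y)$ is an internal abelian-border of $(u,v)$ if $x$ is a nonempty proper suffix of $u$, $y$ is a proper prefix of $v$, and $x\sim_{\mathrm{abl}}y$; it is an external abelian-border of $(u,v)$ if $x$ is a nonempty proper prefix of $u$, $y$ is a proper suffix of $v$, and $x\sim_{\mathrm{abl}}y$. The pair $(u,v)$ is mutually abelian-bordered (MAB) if it has both an internal and an external abelian-border, and mutually abelian-unbordered (MAU) if it has neither. If $(u,v)$ has an internal abelian-border, $\mathrm{sb}(u,v)$ denotes its internal abelian-border $(x,y)$ of minimal length and $\mathrm{lsb}(u,v)=|x|$ is that minimal length. *)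

theory Defs
  imports Main "HOL-Library.Sublist"
begin

datatype letter = a | b

type_synonym word = "letter list"

definition occ :: "word \<Rightarrow> letter \<Rightarrow> nat" where
  "occ w c = count_list w c"

definition abel_eq :: "word \<Rightarrow> word \<Rightarrow> bool" where
  "abel_eq x y \<longleftrightarrow> (\<forall>c. occ x c = occ y c)"

definition internal_border :: "word \<Rightarrow> word \<Rightarrow> word \<Rightarrow> word \<Rightarrow> bool" where
  "internal_border u v x y \<longleftrightarrow>
     x \<noteq> [] \<and> suffix x u \<and> length x < length u \<and>
     prefix y v \<and> length y < length v \<and> abel_eq x y"

definition external_border :: "word \<Rightarrow> word \<Rightarrow> word \<Rightarrow> word \<Rightarrow> bool" where
  "external_border u v x y \<longleftrightarrow>
     x \<noteq> [] \<and> prefix x u \<and> length x < length u \<and>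
     suffix y v \<and> length y < length v \<and> abel_eq x y"

definition has_internal_border :: "word \<Rightarrow> word \<Rightarrow> bool" where
  "has_internal_border u v \<longleftrightarrow> (\<exists>x y. internal_border u v x y)"

definition has_external_border :: "word \<Rightarrow> word \<Rightarrow> bool" where
  "has_external_border u v \<longleftrightarrow> (\<exists>x y. external_border u v x y)"

definition MAB :: "word \<Rightarrow> word \<Rightarrow> bool" where
  "MAB u v \<longleftrightarrow> has_internal_border u v \<and> has_external_border u v"

text \<open>Length of the shortest internal abelian-border (meaningful when one exists).\<close>
definition lsb :: "word \<Rightarrow> word \<Rightarrow> nat" where
  "lsb u v = (LEAST k. \<exists>x y. internal_border u v x y \<and> length x = k)"

end

theory Submission
  imports Defs
begin

definition Fd :: "word \<Rightarrow> word \<Rightarrow> nat \<Rightarrow> int" where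
  "Fd u v m = int (occ (drop (length u - m) u) a) - int (occ (take m v) a)"

lemma occ_ab: "occ w a + occ w b = length w"
  unfolding occ_def by (induction w) (auto split: letter.splits, metis letter.exhaust)

lemma abel_len: "abel_eq x y \<Longrightarrow> length x = length y"
  unfolding abel_eq_def by (metis occ_ab)

lemma abel_intro: "length x = length y \<Longrightarrow> occ x a = occ y a \<Longrightarrow> abel_eq x y"
  unfolding abel_eq_def by (metis occ_ab add_left_cancel letter.exhaust)

lemma occ_take_drop: "occ (take m w) c + occ (drop m w) c = occ w c"
  unfolding occ_def by (metis append_take_drop_id count_list_append)

lemma lsb_props:
  assumes h: "has_internal_border u v" and lu: "length u = n" and lv: "length v = n"
  shows "0 < lsb u v" "lsb u v < n" "Fd u v (lsb u v) = 0"
    "\<And>m. 0 < m \<Longrightarrow> m < lsb u v \<Longrightarrow> Fd u v m \<noteq> 0"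
proof -
  have ex: "\<exists>k x y. internal_border u v x y \<and> length x = k"
    using h unfolding has_internal_border_def by blast
  obtain x y where xy: "internal_border u v x y" "length x = lsb u v"
    using LeastI_ex[OF ex] unfolding lsb_def by blast
  have xd: "x = drop (n - lsb u v) u" using xy lu unfolding internal_border_def
    by (metis suffix_take diff_diff_cancel suffix_length_le append_take_drop_id same_append_eq length_drop)
  have ly: "length y = lsb u v" using xy abel_len unfolding internal_border_def by metis
  have yt: "y = take (lsb u v) v" using xy ly unfolding internal_border_def
    by (metis prefix_def append_eq_conv_conj)
  show "0 < lsb u v" using xy unfolding internal_border_def by (metis length_greater_0_conv)
  show lt: "lsb u v < n" using xy lu unfolding internal_border_def by auto
  show "Fd u v (lsb u v) = 0" using xy xd yt lu unfolding internal_border_def abel_eq_def Fd_def by auto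
  fix m assume m: "0 < m" "m < lsb u v"
  show "Fd u v m \<noteq> 0"
  proof
    assume F: "Fd u v m = 0"
    have "internal_border u v (drop (n - m) u) (take m v)"
      unfolding internal_border_def using m lt lu lv F
      by (auto simp: Fd_def suffix_drop take_is_prefix intro!: abel_intro)
    hence "lsb u v \<le> m" unfolding lsb_def using lu
      by (intro Least_le) (metis length_drop diff_diff_cancel less_imp_le_nat m(2) lt less_trans)
    thus False using m by simp
  qed
qed

definition dl :: "letter \<Rightarrow> int" where "dl x = (if x = a then 1 else 0)"

lemma Fd_step:
  assumes "length u = n" "length v = n" "m < n"
  shows "Fd u v (Suc m) = Fd u v m + dl (u ! (n - Suc m)) - dl (v ! m)"
proof -
  have 1: "drop (n - Suc m) u = u ! (n - Suc m) # drop (n - m) u"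
    using assms by (metis Cons_nth_drop_Suc Suc_diff_Suc diff_less zero_less_Suc less_le_trans Suc_leI)
  have 2: "take (Suc m) v = take m v @ [v ! m]" using assms by (simp add: take_Suc_conv_app_nth)
  show ?thesis unfolding Fd_def using assms 1 2 by (simp add: occ_def dl_def)
qed

lemma Fd_step_abs:
  assumes "length u = n" "length v = n" "m < n"
  shows "\<bar>Fd u v (Suc m) - Fd u v m\<bar> \<le> 1"
  using Fd_step[OF assms] by (simp add: dl_def)

theorem mainTheorem4:
  fixes u v \<alpha> \<gamma> \<beta> \<alpha>' \<gamma>' \<beta>' :: word and n i j :: nat
  assumes "n \<ge> 3"
    and "length u = n" and "length v = n"
    and "MAB u v"
    and "i = lsb u v" and "j = lsb v u"
    and "i + j > n"
    and "u = \<alpha> @ \<gamma> @ \<beta>" and "v = \<beta>' @ \<gamma>' @ \<alpha>'"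
    and "length \<alpha> = n - i" and "length \<alpha>' = n - i"
    and "length \<gamma> = i + j - n" and "length \<gamma>' = i + j - n"
    and "length \<beta> = n - j" and "length \<beta>' = n - j"
  shows "(\<forall>c \<in> {a, b}. \<bar>int (occ \<alpha> c) - int (occ \<alpha>' c)\<bar> = 1) \<longleftrightarrow> i + j - n = 1"
proof -
  note lu = assms(2) and lv = assms(3)
  have hu: "has_internal_border u v" using assms(4) unfolding MAB_def by auto
  have hv: "has_internal_border v u"
  proof -
    obtain x y where "external_border u v x y" using assms(4) unfolding MAB_def has_external_border_def by blast
    hence "internal_border v u y x" unfolding external_border_def internal_border_def abel_eq_def
      using abel_len[of x y] unfolding abel_eq_def by (metis length_greater_0_conv)
    thus ?thesis unfolding has_internal_border_def by blast
  qed
  note P = lsb_props[OF hu lu lv, folded assms(5)]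
  note Q = lsb_props[OF hv lv lu, folded assms(6)]
  have al: "\<alpha> = take (n - i) u" using assms(8,10) by simp
  have al': "\<alpha>' = drop i v" using assms(9,11,13,15,7) P(2) Q(2) by simp
  define G where "G = Fd v u"
  define F where "F = Fd u v"
  have Gni: "G (n - i) = int (occ \<alpha>' a) - int (occ \<alpha> a)"
    unfolding G_def Fd_def al al' using lv P(2) by simp
  have lenaa: "length \<alpha> = length \<alpha>'" using assms by simp
  have iff1: "(\<forall>c \<in> {a, b}. \<bar>int (occ \<alpha> c) - int (occ \<alpha>' c)\<bar> = 1) \<longleftrightarrow> \<bar>G (n - i)\<bar> = 1"
  proof -
    have "int (occ \<alpha> b) - int (occ \<alpha>' b) = - (int (occ \<alpha> a) - int (occ \<alpha>' a))"
      using occ_ab[of \<alpha>] occ_ab[of \<alpha>'] lenaa by linarith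
    thus ?thesis using Gni by auto
  qed
  have Gs: "\<And>m. m < n \<Longrightarrow> \<bar>G (Suc m) - G m\<bar> \<le> 1" unfolding G_def using Fd_step_abs lu lv by blast
  have Gnz: "G (n - i) \<noteq> 0" unfolding G_def using Q(4) P(2) assms(7) by simp
  show ?thesis unfolding iff1
  proof
    assume G1: "\<bar>G (n - i)\<bar> = 1"
    show "i + j - n = 1"
    proof (rule ccontr)
      assume "i + j - n \<noteq> 1"
      hence k2: "i + j \<ge> n + 2" using assms(7) by linarith
      have Gj1: "G (j - 1) \<noteq> 0" unfolding G_def using Q(4) Q(1) k2 P(2) by simp
      have Gj1b: "\<bar>G (j - 1)\<bar> \<le> 1" using Gs[of "j - 1"] Q(3) Q(1) Q(2) unfolding G_def
        by (simp add: Suc_pred)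
      have same: "G (j - 1) = G (n - i)"
      proof (rule ccontr)
        assume ne: "G (j - 1) \<noteq> G (n - i)"
        have "\<exists>t. n - i \<le> t \<and> t \<le> j - 1 \<and> G t = 0"
        proof (cases "G (n - i) = 1")
          case True
          hence "G (j - 1) = -1" using ne Gj1 Gj1b by linarith
          have s: "\<forall>t. n - i \<le> t \<and> t < j - 1 \<longrightarrow> \<bar>(\<lambda>x. - G x) (Suc t) - (\<lambda>x. - G x) t\<bar> \<le> 1"
            using Gs Q(2) by (smt (verit) less_trans diff_less zero_less_one Q(1))
          have "n - i \<le> j - 1" using k2 by arith
          then obtain t where "n - i \<le> t" "t \<le> j - 1" "(\<lambda>x. - G x) t = 0"
            using nat_intermed_int_val[of "n - i" "j - 1" "\<lambda>x. - G x" 0, OF s] True \<open>G (j - 1) = -1\<close>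
            by auto
          thus ?thesis by auto
        next
          case False
          hence "G (n - i) = -1" "G (j - 1) = 1" using ne Gj1 Gj1b G1 by linarith+
          have s: "\<forall>t. n - i \<le> t \<and> t < j - 1 \<longrightarrow> \<bar>G (Suc t) - G t\<bar> \<le> 1"
            using Gs Q(2) by (smt (verit) less_trans diff_less zero_less_one Q(1))
          have "n - i \<le> j - 1" using k2 by arith
          thus ?thesis
            using nat_intermed_int_val[of "n - i" "j - 1" G 0, OF s] \<open>G (n - i) = -1\<close> \<open>G (j - 1) = 1\<close> by auto
        qed
        then obtain t where t: "n - i \<le> t" "t \<le> j - 1" "G t = 0" by blast
        have "G t \<noteq> 0" unfolding G_def using Q(4) t P(2) Q(1) by simp
        thus False using t by simp
      qed
      have FG: "F (n - j) = - G (n - i)"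
      proof -
        have "F i = 0" "G j = 0" using P(3) Q(3) unfolding F_def G_def by auto
        thus ?thesis unfolding F_def G_def Fd_def using lu lv P(2) Q(2)
          occ_take_drop[of "n - j" v a] occ_take_drop[of j u a]
          occ_take_drop[of "n - i" u a] occ_take_drop[of i v a]
          by (simp add: algebra_simps)
      qed
      have st1: "F (Suc (n - j)) = F (n - j) + dl (u ! (j - 1)) - dl (v ! (n - j))"
        unfolding F_def using Fd_step[OF lu lv, of "n - j"] Q(1) Q(2) by (simp add: Suc_diff_Suc)
      have st2: "G (Suc (j - 1)) = G (j - 1) + dl (v ! (n - j)) - dl (u ! (j - 1))"
        unfolding G_def using Fd_step[OF lv lu, of "j - 1"] Q(1) Q(2) by simp
      have "G (Suc (j - 1)) = 0" using Q(3) Q(1) unfolding G_def by simp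
      hence "F (Suc (n - j)) = 0" using st1 st2 FG same by linarith
      moreover have "F (Suc (n - j)) \<noteq> 0" unfolding F_def using P(4) k2 Q(2) by simp
      ultimately show False by simp
    qed
  next
    assume k1: "i + j - n = 1"
    have "Suc (n - i) = j" using k1 P(2) assms(7) by arith
    hence "G (Suc (n - i)) = 0" using Q(3) unfolding G_def by simp
    thus "\<bar>G (n - i)\<bar> = 1" using Gs[of "n - i"] Gnz P(1) P(2) by auto
  qed
qed

end
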